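(* Consider the sub-$\ell^\infty$ structure on $\mathbb{R}^3$ defined by $X_1=\partial_x+y^2\partial_z$, $X_2=\partial_y$. If an extremal pair $(\lambda,\gamma)$ restricted to an open interval $I$ is an abnormal arc and $\gamma$ is not constant on $I$, then $\gamma(I)$ is contained in a line $\{y=0,\ z=z_0\}$ for some $z_0\in\mathbb{R}$. Conversely, every admissible trajectory contained in such a line admits an extremal lift whose restriction to its whole domain is an abnormal arc.
   Context: Sub-$\ell^\infty$ structure defined by smooth vector fields $X_1,\dots,X_k$ on a manifold $M$: an admissible trajectory is an absolutely continuous curve $\gamma:[0,T]\to M$ together with a measurable control $u=(u_1,\dots,u_k):[0,T]\to\mathbb{R}^k$ with $|u_i(t)|\le1$ for all $i$ and a.e. $t$, such that $\dot\gamma(t)=\sum_i u_i(t)X_i(\gamma(t))$ for a.e. $t$. An extremal pair is a pair $(\lambda,\gamma)$ where $\gamma$ is admissible with control $u$ and $\lambda:[0,T]\to T^*M$ is absolutely continuous with $\lambda(t)\in T^*_{\gamma(t)}M\setminus\{0\}$, such that, with $\mathcal H(\lambda,p,u)=\sum_i u_i\langle\lambda,X_i(p)\rangle$, in canonical coordinates $\dot\lambda=-\partial_p\mathcal H(\lambda,\gamma,u)$, $\dot\gamma=\partial_\lambda\mathcal H(\lambda,\gamma,u)$ a.e., and there is a constant $\lambda_0\ge0$ with $\sum_iu_i(t)\langle\lambda(t),X_i(\gamma(t))\rangle=\sum_i|\langle\lambda(t),X_i(\gamma(t))\rangle|=\lambda_0$ for a.e. $t$; $\gamma$ is then an extremal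 trajectory and $\lambda$ an extremal lift. The switching functions are $\varphi_j(t)=\langle\lambda(t),X_j(\gamma(t))\rangle$. The restriction of an extremal pair to an open interval $I$ is an abnormal arc if $\varphi_j\equiv0$ on $I$ for all $j=1,\dots,k$. *)

theory Defs
  imports "HOL-Analysis.Analysis"
begin

text \<open>Points of R^3 and covectors are triples (x, y, z); the pairing of a covector
 with a tangent vector is the standard inner product on the product type.\<close>

definition xc :: "real \<times> real \<times> real \<Rightarrow> real" where "xc p = fst p"
definition yc :: "real \<times> real \<times> real \<Rightarrow> real" where "yc p = fst (snd p)"
definition zc :: "real \<times> real \<times> real \<Rightarrow> real" where "zc p = snd (snd p)"

definition abs_cont_on :: "real set \<Rightarrow> (real \<Rightarrow> 'a::real_normed_vector) \<Rightarrow> bool" where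
  "abs_cont_on S f \<longleftrightarrow>
     (\<forall>\<epsilon>>0. \<exists>\<delta>>0. \<forall>(n::nat) (a::nat \<Rightarrow> real) (b::nat \<Rightarrow> real).
        (\<forall>i<n. a i \<le> b i \<and> {a i..b i} \<subseteq> S) \<longrightarrow>
        (\<forall>i<n. \<forall>j<n. i \<noteq> j \<longrightarrow> b i \<le> a j \<or> b j \<le> a i) \<longrightarrow>
        (\<Sum>i<n. b i - a i) < \<delta> \<longrightarrow>
        (\<Sum>i<n. norm (f (b i) - f (a i))) < \<epsilon>)"

definition X1 :: "real \<times> real \<times> real \<Rightarrow> real \<times> real \<times> real" where
  "X1 p = (1, 0, (yc p)^2)"
definition X2 :: "real \<times> real \<times> real \<Rightarrow> real \<times> real \<times> real" where
  "X2 p = (0, 1, 0)"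

definition admissible ::
  "real \<Rightarrow> (real \<Rightarrow> real \<times> real \<times> real) \<Rightarrow> (real \<Rightarrow> real) \<Rightarrow> (real \<Rightarrow> real) \<Rightarrow> bool" where
  "admissible T \<gamma> u1 u2 \<longleftrightarrow>
     abs_cont_on {0..T} \<gamma> \<and>
     u1 \<in> borel_measurable (lebesgue_on {0..T}) \<and>
     u2 \<in> borel_measurable (lebesgue_on {0..T}) \<and>
     (AE t in lebesgue_on {0..T}. \<bar>u1 t\<bar> \<le> 1 \<and> \<bar>u2 t\<bar> \<le> 1 \<and>
        (\<gamma> has_vector_derivative (u1 t *\<^sub>R X1 (\<gamma> t) + u2 t *\<^sub>R X2 (\<gamma> t))) (at t))"

definition phi1 :: "(real \<Rightarrow> real \<times> real \<times> real) \<Rightarrow> (real \<Rightarrow> real \<times> real \<times> real) \<Rightarrow> real \<Rightarrow> real" where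
  "phi1 lam \<gamma> t = lam t \<bullet> X1 (\<gamma> t)"
definition phi2 :: "(real \<Rightarrow> real \<times> real \<times> real) \<Rightarrow> (real \<Rightarrow> real \<times> real \<times> real) \<Rightarrow> real \<Rightarrow> real" where
  "phi2 lam \<gamma> t = lam t \<bullet> X2 (\<gamma> t)"

text \<open>With H(lambda,p,u) = u1 (lambda_x + y^2 lambda_z) + u2 lambda_y,
 the adjoint equation lambda' = - d_p H reads lambda' = (0, -2 u1 y lambda_z, 0);
 the state equation gamma' = d_lambda H is the admissibility ODE.\<close>
definition extremal_pair ::
  "real \<Rightarrow> (real \<Rightarrow> real \<times> real \<times> real) \<Rightarrow> (real \<Rightarrow> real \<times> real \<times> real)
     \<Rightarrow> (real \<Rightarrow> real) \<Rightarrow> (real \<Rightarrow> real) \<Rightarrow> bool" where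
  "extremal_pair T lam \<gamma> u1 u2 \<longleftrightarrow>
     admissible T \<gamma> u1 u2 \<and>
     abs_cont_on {0..T} lam \<and>
     (\<forall>t\<in>{0..T}. lam t \<noteq> 0) \<and>
     (AE t in lebesgue_on {0..T}.
        (lam has_vector_derivative (0, - 2 * u1 t * yc (\<gamma> t) * zc (lam t), 0)) (at t)) \<and>
     (\<exists>lam0\<ge>0. AE t in lebesgue_on {0..T}.
        u1 t * phi1 lam \<gamma> t + u2 t * phi2 lam \<gamma> t = lam0 \<and>
        \<bar>phi1 lam \<gamma> t\<bar> + \<bar>phi2 lam \<gamma> t\<bar> = lam0)"

definition abnormal_arc ::
  "(real \<Rightarrow> real \<times> real \<times> real) \<Rightarrow> (real \<Rightarrow> real \<times> real \<times> real) \<Rightarrow> real \<Rightarrow> real \<Rightarrow> bool" where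
  "abnormal_arc lam \<gamma> a b \<longleftrightarrow> (\<forall>t\<in>{a<..<b}. phi1 lam \<gamma> t = 0 \<and> phi2 lam \<gamma> t = 0)"

end

theory Submission
  imports Defs
begin


lemma disj_intervals:
  fixes u v u' v' :: real
  assumes "u < v" "u' < v'" "{u<..<v} \<inter> {u'<..<v'} = {}"
  shows "v \<le> u' \<or> v' \<le> u"
proof (rule ccontr)
  assume "\<not> ?thesis"
  hence "u' < v" "u < v'" by auto
  let ?m = "(max u u' + min v v') / 2"
  have "?m \<in> {u<..<v} \<inter> {u'<..<v'}" using assms \<open>u' < v\<close> \<open>u < v'\<close>
    by (auto simp: max_def min_def split: if_split_asm)
  thus False using assms(3) by blast
qed

lemma ac_div:
  fixes f :: "real \<Rightarrow> real"
  assumes ac: "abs_cont_on S f" and e: "e > 0"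
  obtains \<delta> where "\<delta> > 0" "\<And>D. finite D \<Longrightarrow> (\<forall>K\<in>D. \<exists>u v. K = {u..v} \<and> u < v \<and> K \<subseteq> S) \<Longrightarrow>
      pairwise (\<lambda>K L. interior K \<inter> interior L = {}) D \<Longrightarrow> (\<Sum>K\<in>D. Sup K - Inf K) < \<delta> \<Longrightarrow>
      (\<Sum>K\<in>D. \<bar>f (Sup K) - f (Inf K)\<bar>) < e"
proof -
  obtain \<delta> where d: "\<delta> > 0" and dd0: "\<forall>(n::nat) (a::nat \<Rightarrow> real) (b::nat \<Rightarrow> real).
        (\<forall>i<n. a i \<le> b i \<and> {a i..b i} \<subseteq> S) \<longrightarrow>
        (\<forall>i<n. \<forall>j<n. i \<noteq> j \<longrightarrow> b i \<le> a j \<or> b j \<le> a i) \<longrightarrow>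
        (\<Sum>i<n. b i - a i) < \<delta> \<longrightarrow>
        (\<Sum>i<n. norm (f (b i) - f (a i))) < e"
    using ac e unfolding abs_cont_on_def by blast
  have dd: "\<And>(n::nat) (a::nat \<Rightarrow> real) b. (\<forall>i<n. a i \<le> b i \<and> {a i..b i} \<subseteq> S) \<Longrightarrow> (\<forall>i<n. \<forall>j<n. i \<noteq> j \<longrightarrow> b i \<le> a j \<or> b j \<le> a i) \<Longrightarrow> (\<Sum>i<n. b i - a i) < \<delta> \<Longrightarrow> (\<Sum>i<n. norm (f (b i) - f (a i))) < e" using dd0 by blast
  show thesis
  proof (rule that[OF d])
    fix D :: "real set set"
    assume fin: "finite D" and iv: "\<forall>K\<in>D. \<exists>u v. K = {u..v} \<and> u < v \<and> K \<subseteq> S"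
      and pw: "pairwise (\<lambda>K L. interior K \<inter> interior L = {}) D"
      and sm: "(\<Sum>K\<in>D. Sup K - Inf K) < \<delta>"
    obtain h where h: "bij_betw h {0..<card D} D" using ex_bij_betw_nat_finite[OF fin] by blast
    define n where "n = card D"
    define a where "a i = Inf (h i)" for i
    define b where "b i = Sup (h i)" for i
    have hi: "\<exists>u v. h i = {u..v} \<and> u < v \<and> h i \<subseteq> S \<and> a i = u \<and> b i = v" if "i < n" for i
    proof -
      have "h i \<in> D" using h that n_def by (auto simp: bij_betw_def)
      then obtain u v where "h i = {u..v}" "u < v" "h i \<subseteq> S" using iv by blast
      thus ?thesis unfolding a_def b_def by auto
    qed
    have c1: "\<forall>i<n. a i \<le> b i \<and> {a i..b i} \<subseteq> S"
    proof (intro allI impI)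
      fix i assume "i < n"
      then obtain u v where "h i = {u..v}" "u < v" "h i \<subseteq> S" "a i = u" "b i = v" using hi by blast
      thus "a i \<le> b i \<and> {a i..b i} \<subseteq> S" by simp
    qed
    have c2: "\<forall>i<n. \<forall>j<n. i \<noteq> j \<longrightarrow> b i \<le> a j \<or> b j \<le> a i"
    proof (intro allI impI)
      fix i j assume ij: "i < n" "j < n" "i \<noteq> j"
      have ij': "i \<in> {0..<card D}" "j \<in> {0..<card D}" using ij n_def by auto
      have "h i \<noteq> h j" using inj_on_contraD[OF bij_betw_imp_inj_on[OF h] ij(3) ij'] .
      moreover have "h i \<in> D" "h j \<in> D" using bij_betw_apply[OF h] ij' by auto
      ultimately have dis: "interior (h i) \<inter> interior (h j) = {}" using pw unfolding pairwise_def by blast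
      obtain u v where uv: "h i = {u..v}" "u < v" "a i = u" "b i = v" using hi ij by blast
      obtain u' v' where uv': "h j = {u'..v'}" "u' < v'" "a j = u'" "b j = v'" using hi ij by blast
      have "{u<..<v} \<inter> {u'<..<v'} = {}" using dis uv(1) uv'(1) by simp
      from disj_intervals[OF uv(2) uv'(2) this] show "b i \<le> a j \<or> b j \<le> a i" using uv uv' by simp
    qed
    have "(\<Sum>i<n. b i - a i) = (\<Sum>i<n. Sup (h i) - Inf (h i))"
      by (simp add: a_def b_def)
    also have "\<dots> = (\<Sum>K\<in>D. Sup K - Inf K)"
      using sum.reindex_bij_betw[OF h, of "\<lambda>K. Sup K - Inf K"] n_def by (simp add: lessThan_atLeast0)
    finally have c3: "(\<Sum>i<n. b i - a i) < \<delta>" using sm by simp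
    have "(\<Sum>i<n. norm (f (b i) - f (a i))) < e" using dd[OF c1 c2 c3] .
    moreover have "(\<Sum>i<n. norm (f (b i) - f (a i))) = (\<Sum>K\<in>D. \<bar>f (Sup K) - f (Inf K)\<bar>)"
      using sum.reindex_bij_betw[OF h, of "\<lambda>K. \<bar>f (Sup K) - f (Inf K)\<bar>"] n_def
      by (simp add: lessThan_atLeast0 a_def b_def)
    ultimately show "(\<Sum>K\<in>D. \<bar>f (Sup K) - f (Inf K)\<bar>) < e" by simp
  qed
qed




lemma tag_elem:
  assumes p: "p tagged_division_of {c..d::real}" and fine: "(\<lambda>t. ball t (r t)) fine p"
    and xK: "(x,K) \<in> p"
  obtains u v where "K = {u..v}" "u \<le> v" "x \<in> K" "K \<subseteq> {c..d}" "K \<subseteq> ball x (r x)"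
    "Inf K = u" "Sup K = v"
proof -
  obtain u v where K: "K = cbox u v" using tagged_division_ofD(4)[OF p xK] by blast
  have xin: "x \<in> K" using tagged_division_ofD(2)[OF p xK] .
  have sub: "K \<subseteq> {c..d}" using tagged_division_ofD(3)[OF p xK] .
  have b: "K \<subseteq> ball x (r x)" using fine xK unfolding fine_def by blast
  have uv: "u \<le> v" using xin K by auto
  show thesis using that[of u v] K xin sub b uv by auto
qed

lemma eps_zero:
  fixes x k :: real
  assumes k: "k \<ge> 0" and h: "\<And>e. e > 0 \<Longrightarrow> \<bar>x\<bar> \<le> e * k + e"
  shows "x = 0"
proof (rule ccontr)
  assume "x \<noteq> 0"
  hence xp: "\<bar>x\<bar> > 0" by simp
  define e where "e = \<bar>x\<bar> / (2 * (k + 1))"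
  have ep: "e > 0" using xp k unfolding e_def by simp
  have k1: "k + 1 \<noteq> 0" using k by simp
  have "e * k + e = e * (k + 1)" by (simp add: algebra_simps)
  also have "\<dots> = \<bar>x\<bar> / 2" unfolding e_def using k1
    by (metis mult.commute nonzero_mult_divide_mult_cancel_left2 times_divide_eq_right)
  finally have "e * k + e = \<bar>x\<bar> / 2" .
  thus False using h[OF ep] xp by simp
qed

lemma zero_deriv_const:
  fixes f :: "real \<Rightarrow> real"
  assumes cd: "c \<le> d" and ac: "abs_cont_on {c..d} f" and N: "N \<in> null_sets lebesgue"
    and der: "\<And>t. t \<in> {c..d} \<Longrightarrow> t \<notin> N \<Longrightarrow> (f has_real_derivative 0) (at t)"
  shows "f d = f c"
proof -
  have key: "\<bar>f d - f c\<bar> \<le> e * (d - c) + e" if e: "e > 0" for e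
  proof -
    obtain \<delta> where dpos: "\<delta> > 0" and dAC: "\<And>D. finite D \<Longrightarrow> (\<forall>K\<in>D. \<exists>u v. K = {u..v} \<and> u < v \<and> K \<subseteq> {c..d}) \<Longrightarrow>
      pairwise (\<lambda>K L. interior K \<inter> interior L = {}) D \<Longrightarrow> (\<Sum>K\<in>D. Sup K - Inf K) < \<delta> \<Longrightarrow>
      (\<Sum>K\<in>D. \<bar>f (Sup K) - f (Inf K)\<bar>) < e"
      by (rule ac_div[OF ac e], blast)
    have Nleb: "N \<in> sets lebesgue" using N by (simp add: null_setsD2)
    obtain T where T: "open T" "N \<subseteq> T" "(T - N) \<in> lmeasurable" "emeasure lebesgue (T - N) < ennreal \<delta>"
      using sets_lebesgue_outer_open[OF Nleb dpos] by blast
    have Tm: "T \<in> lmeasurable"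
    proof -
      have "N \<in> lmeasurable" using N by (simp add: fmeasurableI_null_sets)
      hence "(T - N) \<union> N \<in> lmeasurable" using T(3) by (rule fmeasurable.Un[rotated])
      moreover have "(T - N) \<union> N = T" using T(2) by blast
      ultimately show ?thesis by simp
    qed
    have Tmeas: "measure lebesgue T < \<delta>"
    proof -
      have "measure lebesgue (T - N) = measure lebesgue T"
        using Tm N by (simp add: measure_Diff_null_set)
      moreover have "measure lebesgue (T - N) < \<delta>"
        using T(4) dpos unfolding measure_def
        by (metis enn2real_less_iff linorder_less_linear top.extremum_strict)
      ultimately show ?thesis by simp
    qed
    have ex: "\<exists>r>0. (t \<in> N \<longrightarrow> ball t r \<subseteq> T) \<and>
        (t \<in> {c..d} \<and> t \<notin> N \<longrightarrow> (\<forall>s. \<bar>s - t\<bar> < r \<longrightarrow> \<bar>f s - f t\<bar> \<le> e * \<bar>s - t\<bar>))" for t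
    proof (cases "t \<in> N")
      case True
      then obtain r where "r > 0" "ball t r \<subseteq> T" using T(1,2) openE by blast
      thus ?thesis using True by blast
    next
      case False
      show ?thesis
      proof (cases "t \<in> {c..d}")
        case False' : False
        show ?thesis by (rule exI[of _ 1]) (use False False' in auto)
      next
        case True
        have "(f has_real_derivative 0) (at t)" using der True False by blast
        hence "((\<lambda>y. (f y - f t) / (y - t)) \<longlongrightarrow> 0) (at t)"
          by (simp add: has_field_derivative_iff)
        hence "\<forall>\<^sub>F y in at t. dist ((f y - f t) / (y - t)) 0 < e"
          using e by (rule tendstoD)
        then obtain r where r: "r > 0" and rr: "\<And>y. y \<noteq> t \<Longrightarrow> dist y t < r \<Longrightarrow> dist ((f y - f t) / (y - t)) 0 < e"
          unfolding eventually_at by blast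
        have "\<bar>f s - f t\<bar> \<le> e * \<bar>s - t\<bar>" if "\<bar>s - t\<bar> < r" for s
        proof (cases "s = t")
          case True thus ?thesis by simp
        next
          case False
          have "\<bar>(f s - f t) / (s - t)\<bar> < e" using rr[OF False] that by (simp add: dist_real_def)
          hence "\<bar>f s - f t\<bar> / \<bar>s - t\<bar> < e" by (simp add: abs_divide)
          moreover have "\<bar>s - t\<bar> > 0" using False by simp
          ultimately show ?thesis by (simp add: pos_divide_less_eq less_imp_le)
        qed
        thus ?thesis using r False by blast
      qed
    qed
    define r where "r t = (SOME r. r > 0 \<and> (t \<in> N \<longrightarrow> ball t r \<subseteq> T) \<and>
        (t \<in> {c..d} \<and> t \<notin> N \<longrightarrow> (\<forall>s. \<bar>s - t\<bar> < r \<longrightarrow> \<bar>f s - f t\<bar> \<le> e * \<bar>s - t\<bar>)))" for t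
    have R: "r t > 0 \<and> (t \<in> N \<longrightarrow> ball t (r t) \<subseteq> T) \<and>
        (t \<in> {c..d} \<and> t \<notin> N \<longrightarrow> (\<forall>s. \<bar>s - t\<bar> < r t \<longrightarrow> \<bar>f s - f t\<bar> \<le> e * \<bar>s - t\<bar>))" for t
      unfolding r_def by (rule someI_ex[OF ex[of t]])
    have r: "\<And>t. r t > 0" using R by blast
    have rN: "\<And>t. t \<in> N \<Longrightarrow> ball t (r t) \<subseteq> T" using R by blast
    have rD: "\<And>t s. t \<in> {c..d} \<Longrightarrow> t \<notin> N \<Longrightarrow> \<bar>s - t\<bar> < r t \<Longrightarrow> \<bar>f s - f t\<bar> \<le> e * \<bar>s - t\<bar>"
      using R by blast
    have g: "gauge (\<lambda>t. ball t (r t))" using gauge_ball_dependent r by blast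
    obtain p where p: "p tagged_division_of {c..d}" and fine: "(\<lambda>t. ball t (r t)) fine p"
      using fine_division_exists_real[OF g] by blast
    have pfin: "finite p" using p by blast
    define \<Delta> where "\<Delta> K = f (Sup K) - f (Inf K)" for K
    define p1 where "p1 = {xK \<in> p. fst xK \<in> N \<and> Inf (snd xK) < Sup (snd xK)}"
    have p1p: "p1 \<subseteq> p" unfolding p1_def by blast
    have sumeq: "(\<Sum>xK\<in>p. \<Delta> (snd xK)) = f d - f c"
    proof -
      have "(\<Sum>(x,K)\<in>p. f(Sup K) - f(Inf K)) = f d - f c" by (rule additive_tagged_division_1[OF cd p])
      thus ?thesis unfolding \<Delta>_def by (simp add: split_def)
    qed
    have lensum: "(\<Sum>xK\<in>p. Sup (snd xK) - Inf (snd xK)) = d - c"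
    proof -
      have "(\<Sum>(x,K)\<in>p. id (Sup K) - id (Inf K)) = id d - id c" by (rule additive_tagged_division_1[OF cd p])
      thus ?thesis by (simp add: split_def)
    qed
    have b2: "\<bar>\<Delta> (snd xK)\<bar> \<le> e * (Sup (snd xK) - Inf (snd xK))" if xK: "xK \<in> p - p1" for xK
    proof -
      obtain x K where xKe: "xK = (x,K)" by (cases xK)
      have xKp: "(x,K) \<in> p" using xK xKe by simp
      obtain u v where K: "K = {u..v}" "u \<le> v" "x \<in> K" "K \<subseteq> {c..d}" "K \<subseteq> ball x (r x)"
          "Inf K = u" "Sup K = v"
        by (rule tag_elem[OF p fine xKp])
      show ?thesis
      proof (cases "u = v")
        case True thus ?thesis using K xKe unfolding \<Delta>_def by simp
      next
        case False
        hence uv: "u < v" using K by simp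
        have xN: "x \<notin> N" using xK xKe uv K unfolding p1_def by auto
        have xcd: "x \<in> {c..d}" using K by blast
        have "v \<in> K" "u \<in> K" using K uv by auto
        hence "v \<in> ball x (r x)" "u \<in> ball x (r x)" using K(5) by blast+
        hence dv: "\<bar>v - x\<bar> < r x" and du: "\<bar>u - x\<bar> < r x" by (auto simp: dist_real_def)
        have "\<bar>f v - f x\<bar> \<le> e * \<bar>v - x\<bar>" by (rule rD[OF xcd xN dv])
        moreover have "\<bar>f u - f x\<bar> \<le> e * \<bar>u - x\<bar>" by (rule rD[OF xcd xN du])
        moreover have "\<bar>v - x\<bar> = v - x" "\<bar>u - x\<bar> = x - u" using K by auto
        ultimately have "\<bar>f v - f u\<bar> \<le> e * (v - u)" by (simp add: abs_le_iff algebra_simps)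
        thus ?thesis using K xKe unfolding \<Delta>_def by simp
      qed
    qed
    have s2: "(\<Sum>xK\<in>p - p1. \<bar>\<Delta> (snd xK)\<bar>) \<le> e * (d - c)"
    proof -
      have "(\<Sum>xK\<in>p - p1. \<bar>\<Delta> (snd xK)\<bar>) \<le> (\<Sum>xK\<in>p - p1. e * (Sup (snd xK) - Inf (snd xK)))"
        by (rule sum_mono) (rule b2)
      also have "\<dots> \<le> (\<Sum>xK\<in>p. e * (Sup (snd xK) - Inf (snd xK)))"
      proof (rule sum_mono2[OF pfin])
        show "p - p1 \<subseteq> p" by blast
        fix xK assume "xK \<in> p - (p - p1)"
        hence "xK \<in> p" by blast
        then obtain x K where xKe: "xK = (x,K)" and xKp: "(x,K) \<in> p" by (cases xK) auto
        obtain u v where K: "K = {u..v}" "u \<le> v" "x \<in> K" "K \<subseteq> {c..d}" "K \<subseteq> ball x (r x)"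
          "Inf K = u" "Sup K = v"
          by (rule tag_elem[OF p fine xKp])
        show "0 \<le> e * (Sup (snd xK) - Inf (snd xK))" using K xKe e by simp
      qed
      also have "\<dots> = e * (d - c)" using lensum by (simp add: sum_distrib_left[symmetric])
      finally show ?thesis .
    qed
    have injsnd: "inj_on snd p1"
    proof (rule inj_onI)
      fix a b assume a: "a \<in> p1" and b: "b \<in> p1" and ab: "snd a = snd b"
      show "a = b"
      proof (rule ccontr)
        assume nab: "a \<noteq> b"
        obtain x K where ae: "a = (x,K)" by (cases a)
        obtain y L where be: "b = (y,L)" by (cases b)
        have KL: "K = L" using ab ae be by simp
        have ap: "(x,K) \<in> p" "(y,K) \<in> p" using a b ae be KL p1p by auto
        have "interior K \<inter> interior K = {}"
          using tagged_division_ofD(5)[OF p ap(1) ap(2)] nab ae be KL by simp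
        moreover obtain u v where K: "K = {u..v}" "Inf K = u" "Sup K = v"
          by (rule tag_elem[OF p fine ap(1)])
        moreover have "Inf K < Sup K" using a ae unfolding p1_def by simp
        ultimately show False by auto
      qed
    qed
    define D where "D = snd ` p1"
    have Dfin: "finite D" unfolding D_def using p1p pfin finite_subset by blast
    have Dint: "\<forall>K\<in>D. \<exists>u v. K = {u..v} \<and> u < v \<and> K \<subseteq> {c..d}"
    proof
      fix K assume "K \<in> D"
      then obtain x where xK: "(x,K) \<in> p1" unfolding D_def by force
      hence xKp: "(x,K) \<in> p" using p1p by blast
      obtain u v where K: "K = {u..v}" "u \<le> v" "x \<in> K" "K \<subseteq> {c..d}" "K \<subseteq> ball x (r x)"
          "Inf K = u" "Sup K = v"
        by (rule tag_elem[OF p fine xKp])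
      have "Inf K < Sup K" using xK unfolding p1_def by simp
      thus "\<exists>u v. K = {u..v} \<and> u < v \<and> K \<subseteq> {c..d}" using K by auto
    qed
    have Dpw: "pairwise (\<lambda>K L. interior K \<inter> interior L = {}) D"
    proof (rule pairwiseI)
      fix K L assume K: "K \<in> D" and L: "L \<in> D" and KL: "K \<noteq> L"
      obtain x where "(x,K) \<in> p1" using K unfolding D_def by force
      hence xK: "(x,K) \<in> p" using p1p by blast
      obtain y where "(y,L) \<in> p1" using L unfolding D_def by force
      hence yL: "(y,L) \<in> p" using p1p by blast
      show "interior K \<inter> interior L = {}"
        using tagged_division_ofD(5)[OF p xK yL] KL by simp
    qed
    have DT: "\<Union>D \<subseteq> T"
    proof
      fix z assume "z \<in> \<Union>D"
      then obtain K where K: "K \<in> D" "z \<in> K" by blast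
      obtain x where xK1: "(x,K) \<in> p1" using K unfolding D_def by force
      hence xK: "(x,K) \<in> p" and xN: "x \<in> N" using p1p unfolding p1_def by auto
      have "K \<subseteq> ball x (r x)" using fine xK unfolding fine_def by blast
      thus "z \<in> T" using rN[OF xN] K by blast
    qed
    have Dsum: "(\<Sum>K\<in>D. Sup K - Inf K) < \<delta>"
    proof -
      have Dm: "\<And>K. K \<in> D \<Longrightarrow> K \<in> lmeasurable" using Dint by auto
      have Dneg: "pairwise (\<lambda>K L. negligible (K \<inter> L)) D"
      proof (rule pairwiseI)
        fix K L assume K: "K \<in> D" and L: "L \<in> D" and KL: "K \<noteq> L"
        obtain u v where uv: "K = {u..v}" "u < v" using Dint K by blast
        obtain u' v' where uv': "L = {u'..v'}" "u' < v'" using Dint L by blast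
        have "interior K \<inter> interior L = {}" using Dpw K L KL by (simp add: pairwise_def)
        hence dis: "{u<..<v} \<inter> {u'<..<v'} = {}" using uv uv' by simp
        have sub: "K \<inter> L \<subseteq> {u,v,u',v'}"
        proof
          fix z assume z: "z \<in> K \<inter> L"
          show "z \<in> {u,v,u',v'}"
          proof (rule ccontr)
            assume "z \<notin> {u,v,u',v'}"
            hence "z \<in> {u<..<v} \<inter> {u'<..<v'}" using z uv uv' by auto
            thus False using dis by blast
          qed
        qed
        have "negligible {u,v,u',v'}" by (rule negligible_finite) simp
        thus "negligible (K \<inter> L)" using sub by (rule negligible_subset)
      qed
      have "(\<Sum>K\<in>D. Sup K - Inf K) = (\<Sum>K\<in>D. measure lebesgue K)"
      proof (rule sum.cong[OF refl])
        fix K assume "K \<in> D"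
        then obtain u v where "K = {u..v}" "u < v" using Dint by blast
        thus "Sup K - Inf K = measure lebesgue K" by simp
      qed
      also have "\<dots> = measure lebesgue (\<Union>D)"
        by (rule measure_negligible_finite_Union[OF Dfin Dm Dneg, symmetric])
      also have "\<dots> \<le> measure lebesgue T"
        by (rule measure_mono_fmeasurable[OF DT _ Tm]) (use Dfin Dm in auto)
      finally show ?thesis using Tmeas by simp
    qed
    have s1: "(\<Sum>xK\<in>p1. \<bar>\<Delta> (snd xK)\<bar>) < e"
    proof -
      have "(\<Sum>xK\<in>p1. \<bar>\<Delta> (snd xK)\<bar>) = (\<Sum>K\<in>D. \<bar>\<Delta> K\<bar>)"
        unfolding D_def using sum.reindex[OF injsnd, of "\<lambda>K. \<bar>\<Delta> K\<bar>"] by simp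
      also have "\<dots> < e" unfolding \<Delta>_def by (rule dAC[OF Dfin Dint Dpw Dsum])
      finally show ?thesis .
    qed
    have "\<bar>f d - f c\<bar> \<le> (\<Sum>xK\<in>p. \<bar>\<Delta> (snd xK)\<bar>)"
      using sumeq sum_abs[of "\<lambda>xK. \<Delta> (snd xK)" p] by simp
    also have "\<dots> = (\<Sum>xK\<in>p - p1. \<bar>\<Delta> (snd xK)\<bar>) + (\<Sum>xK\<in>p1. \<bar>\<Delta> (snd xK)\<bar>)"
      by (rule sum.subset_diff[OF p1p pfin])
    also have "\<dots> \<le> e * (d - c) + e" using s1 s2 by simp
    finally show ?thesis .
  qed
  have "f d - f c = 0" by (rule eps_zero[of "d - c"]) (use cd key in auto)
  thus ?thesis by simp
qed




lemma ac_mono: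
  assumes "abs_cont_on S f" "S' \<subseteq> S"
  shows "abs_cont_on S' f"
  unfolding abs_cont_on_def
proof (intro allI impI)
  fix \<epsilon> :: real assume e: "\<epsilon> > 0"
  obtain \<delta> where d: "\<delta> > 0" and dd: "\<forall>(n::nat) (a::nat \<Rightarrow> real) (b::nat \<Rightarrow> real).
        (\<forall>i<n. a i \<le> b i \<and> {a i..b i} \<subseteq> S) \<longrightarrow>
        (\<forall>i<n. \<forall>j<n. i \<noteq> j \<longrightarrow> b i \<le> a j \<or> b j \<le> a i) \<longrightarrow>
        (\<Sum>i<n. b i - a i) < \<delta> \<longrightarrow>
        (\<Sum>i<n. norm (f (b i) - f (a i))) < \<epsilon>"
    using assms(1) e unfolding abs_cont_on_def by blast
  show "\<exists>\<delta>>0. \<forall>(n::nat) (a::nat \<Rightarrow> real) (b::nat \<Rightarrow> real).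
        (\<forall>i<n. a i \<le> b i \<and> {a i..b i} \<subseteq> S') \<longrightarrow>
        (\<forall>i<n. \<forall>j<n. i \<noteq> j \<longrightarrow> b i \<le> a j \<or> b j \<le> a i) \<longrightarrow>
        (\<Sum>i<n. b i - a i) < \<delta> \<longrightarrow>
        (\<Sum>i<n. norm (f (b i) - f (a i))) < \<epsilon>"
  proof (intro exI[of _ \<delta>] conjI d allI impI)
    fix n :: nat and a b :: "nat \<Rightarrow> real"
    assume h1: "\<forall>i<n. a i \<le> b i \<and> {a i..b i} \<subseteq> S'"
      and h2: "\<forall>i<n. \<forall>j<n. i \<noteq> j \<longrightarrow> b i \<le> a j \<or> b j \<le> a i"
      and h3: "(\<Sum>i<n. b i - a i) < \<delta>"
    have h1': "\<forall>i<n. a i \<le> b i \<and> {a i..b i} \<subseteq> S" using h1 assms(2) by blast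
    show "(\<Sum>i<n. norm (f (b i) - f (a i))) < \<epsilon>" using dd h1' h2 h3 by blast
  qed
qed

lemma ac_comp:
  fixes h :: "'a::real_normed_vector \<Rightarrow> real"
  assumes "abs_cont_on S g" and lip: "\<And>x y. \<bar>h x - h y\<bar> \<le> norm (x - y)"
  shows "abs_cont_on S (\<lambda>t. h (g t))"
  unfolding abs_cont_on_def
proof (intro allI impI)
  fix \<epsilon> :: real assume e: "\<epsilon> > 0"
  obtain \<delta> where d: "\<delta> > 0" and dd: "\<forall>(n::nat) (a::nat \<Rightarrow> real) (b::nat \<Rightarrow> real).
        (\<forall>i<n. a i \<le> b i \<and> {a i..b i} \<subseteq> S) \<longrightarrow>
        (\<forall>i<n. \<forall>j<n. i \<noteq> j \<longrightarrow> b i \<le> a j \<or> b j \<le> a i) \<longrightarrow>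
        (\<Sum>i<n. b i - a i) < \<delta> \<longrightarrow>
        (\<Sum>i<n. norm (g (b i) - g (a i))) < \<epsilon>"
    using assms(1) e unfolding abs_cont_on_def by blast
  show "\<exists>\<delta>>0. \<forall>(n::nat) (a::nat \<Rightarrow> real) (b::nat \<Rightarrow> real).
        (\<forall>i<n. a i \<le> b i \<and> {a i..b i} \<subseteq> S) \<longrightarrow>
        (\<forall>i<n. \<forall>j<n. i \<noteq> j \<longrightarrow> b i \<le> a j \<or> b j \<le> a i) \<longrightarrow>
        (\<Sum>i<n. b i - a i) < \<delta> \<longrightarrow>
        (\<Sum>i<n. norm (h (g (b i)) - h (g (a i)))) < \<epsilon>"
  proof (intro exI[of _ \<delta>] conjI d allI impI)
    fix n :: nat and a b :: "nat \<Rightarrow> real"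
    assume h1: "\<forall>i<n. a i \<le> b i \<and> {a i..b i} \<subseteq> S"
      and h2: "\<forall>i<n. \<forall>j<n. i \<noteq> j \<longrightarrow> b i \<le> a j \<or> b j \<le> a i"
      and h3: "(\<Sum>i<n. b i - a i) < \<delta>"
    have "(\<Sum>i<n. norm (h (g (b i)) - h (g (a i)))) \<le> (\<Sum>i<n. norm (g (b i) - g (a i)))"
      by (rule sum_mono) (simp add: lip)
    also have "\<dots> < \<epsilon>" using dd h1 h2 h3 by blast
    finally show "(\<Sum>i<n. norm (h (g (b i)) - h (g (a i)))) < \<epsilon>" .
  qed
qed

lemma nfst: "norm (fst z) \<le> norm z" by (metis norm_fst_le prod.collapse)
lemma nsnd: "norm (snd z) \<le> norm z" by (metis norm_snd_le prod.collapse)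

lemma lip_xc: "\<bar>xc x - xc y\<bar> \<le> norm (x - y)"
proof -
  have "\<bar>xc x - xc y\<bar> = norm (fst (x - y))" by (simp add: xc_def)
  also have "\<dots> \<le> norm (x - y)" by (rule nfst)
  finally show ?thesis .
qed

lemma lip_yc: "\<bar>yc x - yc y\<bar> \<le> norm (x - y)"
proof -
  have "\<bar>yc x - yc y\<bar> = norm (fst (snd (x - y)))" by (simp add: yc_def)
  also have "\<dots> \<le> norm (snd (x - y))" by (rule nfst)
  also have "\<dots> \<le> norm (x - y)" by (rule nsnd)
  finally show ?thesis .
qed

lemma lip_zc: "\<bar>zc x - zc y\<bar> \<le> norm (x - y)"
proof -
  have "\<bar>zc x - zc y\<bar> = norm (snd (snd (x - y)))" by (simp add: zc_def)
  also have "\<dots> \<le> norm (snd (x - y))" by (rule nsnd)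
  also have "\<dots> \<le> norm (x - y)" by (rule nsnd)
  finally show ?thesis .
qed

lemma AE_null:
  assumes "AE t in lebesgue_on S. P t" "S \<in> sets lebesgue"
  obtains N where "N \<in> null_sets lebesgue" "\<And>t. t \<in> S \<Longrightarrow> t \<notin> N \<Longrightarrow> P t"
proof -
  have "AE t in lebesgue. t \<in> S \<longrightarrow> P t"
    using assms by (simp add: AE_restrict_space_iff)
  then obtain N where "\<And>x. x \<in> space lebesgue - N \<Longrightarrow> x \<in> S \<longrightarrow> P x" "N \<in> null_sets lebesgue"
    by (rule AE_E3, blast)
  thus thesis using that by auto
qed

lemma const_on:
  fixes f :: "real \<Rightarrow> real"
  assumes ac: "abs_cont_on {0..T} f" and N: "N \<in> null_sets lebesgue" and a0: "0 \<le> a" and bT: "b \<le> T"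
    and der: "\<And>t. t \<in> {a<..<b} \<Longrightarrow> t \<notin> N \<Longrightarrow> (f has_real_derivative 0) (at t)"
    and s: "s \<in> {a<..<b}" and t: "t \<in> {a<..<b}"
  shows "f s = f t"
proof -
  have gen: "f s = f t" if s: "s \<in> {a<..<b}" and t: "t \<in> {a<..<b}" and st: "s \<le> t" for s t
  proof -
    have sub: "{s..t} \<subseteq> {0..T}" using s t a0 bT by auto
    have "f t = f s"
    proof (rule zero_deriv_const[OF st ac_mono[OF ac sub] N])
      fix x assume "x \<in> {s..t}" "x \<notin> N"
      moreover have "x \<in> {a<..<b}" using \<open>x \<in> {s..t}\<close> s t by auto
      ultimately show "(f has_real_derivative 0) (at x)" using der by blast
    qed
    thus ?thesis by simp
  qed
  show ?thesis
  proof (cases "s \<le> t")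
    case True thus ?thesis using gen s t by blast
  next
    case False thus ?thesis using gen[OF t s] by simp
  qed
qed

lemma locconst_deriv:
  fixes f :: "real \<Rightarrow> real"
  assumes "open S" "t \<in> S" "\<And>s. s \<in> S \<Longrightarrow> f s = k" "(f has_real_derivative D) (at t)"
  shows "D = 0"
proof -
  have "((\<lambda>_. k) has_real_derivative 0) (at t)" by simp
  hence "(f has_real_derivative 0) (at t)"
    by (rule has_field_derivative_transform_within_open[OF _ assms(1,2)]) (simp add: assms(3))
  thus ?thesis using DERIV_unique assms(4) by blast
qed

lemma comp_ders:
  assumes "(g has_vector_derivative v) (at t)"
  shows "((\<lambda>s. xc (g s)) has_real_derivative xc v) (at t)"
    "((\<lambda>s. yc (g s)) has_real_derivative yc v) (at t)"
    "((\<lambda>s. zc (g s)) has_real_derivative zc v) (at t)"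
proof -
  have f: "((\<lambda>s. fst (g s)) has_vector_derivative fst v) (at t)"
    by (rule bounded_linear.has_vector_derivative[OF bounded_linear_fst assms])
  have s: "((\<lambda>s. snd (g s)) has_vector_derivative snd v) (at t)"
    by (rule bounded_linear.has_vector_derivative[OF bounded_linear_snd assms])
  have fs: "((\<lambda>s. fst (snd (g s))) has_vector_derivative fst (snd v)) (at t)"
    by (rule bounded_linear.has_vector_derivative[OF bounded_linear_fst s])
  have ss: "((\<lambda>s. snd (snd (g s))) has_vector_derivative snd (snd v)) (at t)"
    by (rule bounded_linear.has_vector_derivative[OF bounded_linear_snd s])
  show "((\<lambda>s. xc (g s)) has_real_derivative xc v) (at t)"
    using f by (simp add: xc_def has_real_derivative_iff_has_vector_derivative)
  show "((\<lambda>s. yc (g s)) has_real_derivative yc v) (at t)"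
    using fs by (simp add: yc_def has_real_derivative_iff_has_vector_derivative)
  show "((\<lambda>s. zc (g s)) has_real_derivative zc v) (at t)"
    using ss by (simp add: zc_def has_real_derivative_iff_has_vector_derivative)
qed

lemma triple_eq: "p = (xc p, yc p, zc p)" by (simp add: xc_def yc_def zc_def)

lemma inner_X1: "l \<bullet> X1 p = xc l + (yc p)^2 * zc l"
  by (simp add: X1_def inner_prod_def xc_def yc_def zc_def)
lemma inner_X2: "l \<bullet> X2 p = yc l"
  by (simp add: X2_def inner_prod_def xc_def yc_def zc_def)




lemma part2:
  assumes adm: "admissible T \<gamma> u1 u2" and on: "\<forall>t\<in>{0..T}. yc (\<gamma> t) = 0 \<and> zc (\<gamma> t) = z0"
  shows "\<exists>lam. extremal_pair T lam \<gamma> u1 u2 \<and> abnormal_arc lam \<gamma> 0 T"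
proof (intro exI conjI)
  let ?lam = "\<lambda>_::real. (0::real, 0::real, 1::real)"
  have ac: "abs_cont_on {0..T} ?lam"
    unfolding abs_cont_on_def by (intro allI impI exI[of _ 1]) simp
  have der: "AE t in lebesgue_on {0..T}.
        (?lam has_vector_derivative (0, - 2 * u1 t * yc (\<gamma> t) * zc (?lam t), 0)) (at t)"
  proof (rule AE_I2)
    fix t assume "t \<in> space (lebesgue_on {0..T})"
    hence "t \<in> {0..T}" by simp
    hence "yc (\<gamma> t) = 0" using on by blast
    thus "(?lam has_vector_derivative (0, - 2 * u1 t * yc (\<gamma> t) * zc (?lam t), 0)) (at t)"
      by (simp add: zero_prod_def[symmetric] has_vector_derivative_const)
  qed
  have ph: "phi1 ?lam \<gamma> t = 0 \<and> phi2 ?lam \<gamma> t = 0" if "t \<in> {0..T}" for t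
    using on that by (simp add: phi1_def phi2_def inner_X1 inner_X2 xc_def yc_def zc_def)
  have sw: "\<exists>lam0\<ge>0. AE t in lebesgue_on {0..T}.
        u1 t * phi1 ?lam \<gamma> t + u2 t * phi2 ?lam \<gamma> t = lam0 \<and>
        \<bar>phi1 ?lam \<gamma> t\<bar> + \<bar>phi2 ?lam \<gamma> t\<bar> = lam0"
  proof (intro exI[of _ 0] conjI)
    show "(0::real) \<le> 0" by simp
    show "AE t in lebesgue_on {0..T}.
        u1 t * phi1 ?lam \<gamma> t + u2 t * phi2 ?lam \<gamma> t = 0 \<and>
        \<bar>phi1 ?lam \<gamma> t\<bar> + \<bar>phi2 ?lam \<gamma> t\<bar> = 0"
      by (rule AE_I2) (use ph in simp)
  qed
  show "extremal_pair T ?lam \<gamma> u1 u2"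
  proof -
    have nz: "\<forall>t\<in>{0..T}. ?lam t \<noteq> 0" by (simp add: zero_prod_def)
    show ?thesis unfolding extremal_pair_def by (intro conjI adm ac nz der sw)
  qed
  show "abnormal_arc ?lam \<gamma> 0 T"
    unfolding abnormal_arc_def using ph by auto
qed




lemma part1:
  assumes ep: "extremal_pair T lam \<gamma> u1 u2" and a0: "0 \<le> a" and ab: "a < b" and bT: "b \<le> T"
    and abn: "abnormal_arc lam \<gamma> a b"
    and nc: "\<exists>s\<in>{a<..<b}. \<exists>t\<in>{a<..<b}. \<gamma> s \<noteq> \<gamma> t"
  shows "\<exists>z0::real. \<forall>t\<in>{a<..<b}. yc (\<gamma> t) = 0 \<and> zc (\<gamma> t) = z0"
proof -
  have adm: "admissible T \<gamma> u1 u2" and lac: "abs_cont_on {0..T} lam"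
    and lnz: "\<forall>t\<in>{0..T}. lam t \<noteq> 0"
    and lder: "AE t in lebesgue_on {0..T}.
        (lam has_vector_derivative (0, - 2 * u1 t * yc (\<gamma> t) * zc (lam t), 0)) (at t)"
    using ep unfolding extremal_pair_def by blast+
  have gac: "abs_cont_on {0..T} \<gamma>"
    and gAE: "AE t in lebesgue_on {0..T}. \<bar>u1 t\<bar> \<le> 1 \<and> \<bar>u2 t\<bar> \<le> 1 \<and>
        (\<gamma> has_vector_derivative (u1 t *\<^sub>R X1 (\<gamma> t) + u2 t *\<^sub>R X2 (\<gamma> t))) (at t)"
    using adm unfolding admissible_def by blast+
  have Tleb: "{0..T} \<in> sets lebesgue" by simp
  obtain N1 where N1: "N1 \<in> null_sets lebesgue"
    and N1d': "\<And>t. t \<in> {0..T} \<Longrightarrow> t \<notin> N1 \<Longrightarrow> \<bar>u1 t\<bar> \<le> 1 \<and> \<bar>u2 t\<bar> \<le> 1 \<and>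
       (\<gamma> has_vector_derivative (u1 t *\<^sub>R X1 (\<gamma> t) + u2 t *\<^sub>R X2 (\<gamma> t))) (at t)"
    by (rule AE_null[OF gAE Tleb], blast)
  have N1d: "\<And>t. t \<in> {0..T} \<Longrightarrow> t \<notin> N1 \<Longrightarrow>
       (\<gamma> has_vector_derivative (u1 t *\<^sub>R X1 (\<gamma> t) + u2 t *\<^sub>R X2 (\<gamma> t))) (at t)"
    using N1d' by blast
  obtain N2 where N2: "N2 \<in> null_sets lebesgue"
    and N2d: "\<And>t. t \<in> {0..T} \<Longrightarrow> t \<notin> N2 \<Longrightarrow>
       (lam has_vector_derivative (0, - 2 * u1 t * yc (\<gamma> t) * zc (lam t), 0)) (at t)"
    by (rule AE_null[OF lder Tleb], blast)
  define N where "N = N1 \<union> N2"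
  have N: "N \<in> null_sets lebesgue" unfolding N_def using N1 N2 by auto
  define X where "X t = xc (\<gamma> t)" for t
  define Y where "Y t = yc (\<gamma> t)" for t
  define Z where "Z t = zc (\<gamma> t)" for t
  define Lx where "Lx t = xc (lam t)" for t
  define Ly where "Ly t = yc (lam t)" for t
  define Lz where "Lz t = zc (lam t)" for t
  have abT: "{a<..<b} \<subseteq> {0..T}" using a0 bT by auto
  have dG: "(X has_real_derivative u1 t) (at t) \<and> (Y has_real_derivative u2 t) (at t)
      \<and> (Z has_real_derivative u1 t * (Y t)^2) (at t)" if "t \<in> {0..T}" "t \<notin> N" for t
  proof -
    have d: "(\<gamma> has_vector_derivative (u1 t *\<^sub>R X1 (\<gamma> t) + u2 t *\<^sub>R X2 (\<gamma> t))) (at t)"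
      using N1d that unfolding N_def by blast
    note cd = comp_ders[OF d]
    have e1: "xc (u1 t *\<^sub>R X1 (\<gamma> t) + u2 t *\<^sub>R X2 (\<gamma> t)) = u1 t"
      by (simp add: X1_def X2_def xc_def)
    have e2: "yc (u1 t *\<^sub>R X1 (\<gamma> t) + u2 t *\<^sub>R X2 (\<gamma> t)) = u2 t"
      by (simp add: X1_def X2_def yc_def)
    have e3: "zc (u1 t *\<^sub>R X1 (\<gamma> t) + u2 t *\<^sub>R X2 (\<gamma> t)) = u1 t * (Y t)^2"
      by (simp add: X1_def X2_def zc_def Y_def)
    show ?thesis using cd unfolding e1 e2 e3 X_def[abs_def] Y_def[abs_def] Z_def[abs_def] by blast
  qed
  have dL: "(Lx has_real_derivative 0) (at t) \<and> (Ly has_real_derivative - 2 * u1 t * Y t * Lz t) (at t)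
      \<and> (Lz has_real_derivative 0) (at t)" if "t \<in> {0..T}" "t \<notin> N" for t
  proof -
    have d: "(lam has_vector_derivative (0, - 2 * u1 t * yc (\<gamma> t) * zc (lam t), 0)) (at t)"
      using N2d that unfolding N_def by blast
    note cd = comp_ders[OF d]
    show ?thesis using cd unfolding Lx_def[abs_def] Ly_def[abs_def] Lz_def[abs_def] Y_def
      by (simp add: xc_def yc_def zc_def)
  qed
  have acX: "abs_cont_on {0..T} X" unfolding X_def by (rule ac_comp[OF gac lip_xc])
  have acY: "abs_cont_on {0..T} Y" unfolding Y_def by (rule ac_comp[OF gac lip_yc])
  have acZ: "abs_cont_on {0..T} Z" unfolding Z_def by (rule ac_comp[OF gac lip_zc])
  have acLx: "abs_cont_on {0..T} Lx" unfolding Lx_def by (rule ac_comp[OF lac lip_xc])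
  have acLz: "abs_cont_on {0..T} Lz" unfolding Lz_def by (rule ac_comp[OF lac lip_zc])
  have ph: "Lx t + (Y t)^2 * Lz t = 0 \<and> Ly t = 0" if "t \<in> {a<..<b}" for t
    using abn that unfolding abnormal_arc_def phi1_def phi2_def inner_X1 inner_X2 Lx_def Ly_def Lz_def Y_def
    by blast
  obtain s0 t0 where s0: "s0 \<in> {a<..<b}" and t0: "t0 \<in> {a<..<b}" and st0: "\<gamma> s0 \<noteq> \<gamma> t0"
    using nc by blast
  have cLx: "Lx t = Lx t0" if "t \<in> {a<..<b}" for t
    by (rule const_on[OF acLx N a0 bT _ that t0]) (use dL abT in blast)
  have cLz: "Lz t = Lz t0" if "t \<in> {a<..<b}" for t
    by (rule const_on[OF acLz N a0 bT _ that t0]) (use dL abT in blast)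
  have Lz0: "Lz t0 \<noteq> 0"
  proof
    assume z: "Lz t0 = 0"
    hence "Lx t0 = 0" "Ly t0 = 0" using ph[OF t0] by auto
    hence "lam t0 = 0" using z triple_eq[of "lam t0"] unfolding Lx_def Ly_def Lz_def
      by (simp add: zero_prod_def)
    thus False using lnz t0 abT by blast
  qed
  define K where "K = - Lx t0 / Lz t0"
  have YK: "(Y t)^2 = K" if "t \<in> {a<..<b}" for t
  proof -
    have "Lx t0 + (Y t)^2 * Lz t0 = 0" using ph[OF that] cLx[OF that] cLz[OF that] by simp
    hence h2: "(Y t)^2 * Lz t0 = - Lx t0" by linarith
    show ?thesis unfolding K_def using Lz0 h2 by (simp add: field_simps)
  qed
  have u1Y: "u1 t * Y t = 0" if "t \<in> {a<..<b}" "t \<notin> N" for t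
  proof -
    have "- 2 * u1 t * Y t * Lz t = 0"
      by (rule locconst_deriv[of "{a<..<b}" t Ly 0]) (use that ph dL abT in auto)
    thus ?thesis using Lz0 cLz[OF that(1)] by simp
  qed
  show ?thesis
  proof (cases "K = 0")
    case True
    hence Y0: "Y t = 0" if "t \<in> {a<..<b}" for t using YK[OF that] by simp
    have cZ: "Z t = Z t0" if "t \<in> {a<..<b}" for t
    proof (rule const_on[OF acZ N a0 bT _ that t0])
      fix s assume s: "s \<in> {a<..<b}" "s \<notin> N"
      have "(Z has_real_derivative u1 s * (Y s)^2) (at s)" using dG s abT by blast
      thus "(Z has_real_derivative 0) (at s)" using Y0[OF s(1)] by simp
    qed
    show ?thesis
      by (rule exI[of _ "Z t0"]) (use Y0 cZ in \<open>auto simp: Y_def Z_def\<close>)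
  next
    case False
    have Ynz: "Y t \<noteq> 0" if "t \<in> {a<..<b}" for t using YK[OF that] False by auto
    have u10: "u1 t = 0" if "t \<in> {a<..<b}" "t \<notin> N" for t using u1Y[OF that] Ynz[OF that(1)] by simp
    have u20: "u2 t = 0" if "t \<in> {a<..<b}" "t \<notin> N" for t
    proof -
      have dY: "(Y has_real_derivative u2 t) (at t)" using dG that abT by blast
      have "((\<lambda>s. Y s * Y s) has_real_derivative u2 t * Y t + u2 t * Y t) (at t)"
        using DERIV_mult[OF dY dY] .
      hence "u2 t * Y t + u2 t * Y t = 0"
        by (rule locconst_deriv[of "{a<..<b}" t _ K, rotated 3]) (use that YK in \<open>auto simp: power2_eq_square\<close>)
      thus ?thesis using Ynz[OF that(1)] by simp
    qed
    have cX: "X s0 = X t0"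
    proof (rule const_on[OF acX N a0 bT _ s0 t0])
      fix s assume s: "s \<in> {a<..<b}" "s \<notin> N"
      thus "(X has_real_derivative 0) (at s)" using dG[of s] abT u10[OF s] by auto
    qed
    have cY: "Y s0 = Y t0"
    proof (rule const_on[OF acY N a0 bT _ s0 t0])
      fix s assume s: "s \<in> {a<..<b}" "s \<notin> N"
      thus "(Y has_real_derivative 0) (at s)" using dG[of s] abT u20[OF s] by auto
    qed
    have cZ: "Z s0 = Z t0"
    proof (rule const_on[OF acZ N a0 bT _ s0 t0])
      fix s assume s: "s \<in> {a<..<b}" "s \<notin> N"
      thus "(Z has_real_derivative 0) (at s)" using dG[of s] abT u10[OF s] by auto
    qed
    have "\<gamma> s0 = \<gamma> t0" using triple_eq[of "\<gamma> s0"] triple_eq[of "\<gamma> t0"] cX cY cZ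
      unfolding X_def Y_def Z_def by simp
    thus ?thesis using st0 by blast
  qed
qed

theorem mainTheorem15:
  shows "(\<forall>T lam \<gamma> u1 u2 a b.
            extremal_pair T lam \<gamma> u1 u2 \<and> 0 \<le> a \<and> a < b \<and> b \<le> T \<and>
            abnormal_arc lam \<gamma> a b \<and>
            (\<exists>s\<in>{a<..<b}. \<exists>t\<in>{a<..<b}. \<gamma> s \<noteq> \<gamma> t)
            \<longrightarrow> (\<exists>z0::real. \<forall>t\<in>{a<..<b}. yc (\<gamma> t) = 0 \<and> zc (\<gamma> t) = z0))
       \<and> (\<forall>T \<gamma> u1 u2 (z0::real).
            admissible T \<gamma> u1 u2 \<and> (\<forall>t\<in>{0..T}. yc (\<gamma> t) = 0 \<and> zc (\<gamma> t) = z0)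
            \<longrightarrow> (\<exists>lam. extremal_pair T lam \<gamma> u1 u2 \<and> abnormal_arc lam \<gamma> 0 T))"
proof (intro conjI allI impI)
  fix T lam \<gamma> u1 u2 a b
  assume H: "extremal_pair T lam \<gamma> u1 u2 \<and> 0 \<le> a \<and> a < b \<and> b \<le> T \<and>
            abnormal_arc lam \<gamma> a b \<and> (\<exists>s\<in>{a<..<b}. \<exists>t\<in>{a<..<b}. \<gamma> s \<noteq> \<gamma> t)"
  show "\<exists>z0::real. \<forall>t\<in>{a<..<b}. yc (\<gamma> t) = 0 \<and> zc (\<gamma> t) = z0"
    using H by (elim conjE) (rule part1)
next
  fix T \<gamma> u1 u2 and z0 :: real
  assume H: "admissible T \<gamma> u1 u2 \<and> (\<forall>t\<in>{0..T}. yc (\<gamma> t) = 0 \<and> zc (\<gamma> t) = z0)"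
  show "\<exists>lam. extremal_pair T lam \<gamma> u1 u2 \<and> abnormal_arc lam \<gamma> 0 T"
    using H by (elim conjE) (rule part2)
qed


end
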